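(* Let $V$ be a finite set, $\{C_\alpha\}$ a partition of $V$, and ${\bf t}=(t_i)_{i\in V}$, $\{\lambda_\alpha\}$ complex numbers. Then $$\int\mathcal{D}_{V,{\bf t}}(\psi,\bar\psi)\prod_\alpha f_{C_\alpha}^{(\lambda_\alpha)}=\prod_\alpha\Big(\lambda_\alpha+\sum_{i\in C_\alpha}(t_i-\lambda_\alpha)\Big).$$
   Context: For each $i\in V$ let $\psi_i,\bar\psi_i$ be anticommuting generators of a Grassmann algebra over $\mathbb{C}$; $\tau_A=\prod_{i\in A}\bar\psi_i\psi_i$ ($\tau_\emptyset=1$); $f_A^{(\lambda)}=\lambda(1-|A|)\tau_A+\sum_{i\in A}\tau_{A\setminus\{i\}}-\sum_{i,j\in A,\ i\neq j}\bar\psi_i\psi_j\,\tau_{A\setminus\{i,j\}}$. $\mathcal{D}_{V,{\bf t}}(\psi,\bar\psi)=\prod_{i\in V}d\psi_i\,d\bar\psi_i\,e^{t_i\bar\psi_i\psi_i}$, with Berezin conventions $\int d\psi_i\,d\bar\psi_i\,\bar\psi_i\psi_i=1$ and the integral of $1,\psi_i,\bar\psi_i$ equal to $0$. *)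

theory Defs
  imports Complex_Main "HOL-Library.Product_Lexorder"
begin

text \<open>Grassmann algebra over complex numbers with generators indexed by 'a \<times> bool:
  (i, False) is psi_i and (i, True) is psibar_i.  An element is represented by its
  coefficient function on monomials; a monomial is a finite set of generators,
  standing for the product of its generators in increasing (lexicographic) order.\<close>

type_synonym 'a grass = "('a \<times> bool) set \<Rightarrow> complex"

definition gsign :: "('a::linorder \<times> bool) set \<Rightarrow> ('a \<times> bool) set \<Rightarrow> complex" where
  "gsign S R = (-1) ^ card {(a, b). a \<in> S \<and> b \<in> R \<and> b < a}"

definition gmul :: "'a::linorder grass \<Rightarrow> 'a grass \<Rightarrow> 'a grass" where
  "gmul x y = (\<lambda>T. \<Sum>S\<in>Pow T. gsign S (T - S) * x S * y (T - S))"

definition gadd :: "'a grass \<Rightarrow> 'a grass \<Rightarrow> 'a grass" where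
  "gadd x y = (\<lambda>T. x T + y T)"

definition gsmul :: "complex \<Rightarrow> 'a grass \<Rightarrow> 'a grass" where
  "gsmul c x = (\<lambda>T. c * x T)"

definition gzero :: "'a grass" where
  "gzero = (\<lambda>T. 0)"

definition gone :: "'a grass" where
  "gone = (\<lambda>T. if T = {} then 1 else 0)"

definition gsum :: "('b \<Rightarrow> 'a grass) \<Rightarrow> 'b set \<Rightarrow> 'a grass" where
  "gsum F A = (\<lambda>T. \<Sum>a\<in>A. F a T)"

definition gprodl :: "'a::linorder grass list \<Rightarrow> 'a grass" where
  "gprodl xs = foldr gmul xs gone"

definition gpow :: "'a::linorder grass \<Rightarrow> nat \<Rightarrow> 'a grass" where
  "gpow x k = gprodl (replicate k x)"

definition gexp :: "'a::linorder grass \<Rightarrow> 'a grass" where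
  "gexp x = gsum (\<lambda>k. gsmul (1 / fact k) (gpow x k)) {..<(LEAST m. gpow x m = gzero)}"

definition gen :: "'a \<times> bool \<Rightarrow> 'a grass" where
  "gen g = (\<lambda>T. if T = {g} then 1 else 0)"

definition psi :: "'a \<Rightarrow> 'a grass" where
  "psi i = gen (i, False)"

definition psibar :: "'a \<Rightarrow> 'a grass" where
  "psibar i = gen (i, True)"

text \<open>tau_A = prod_{i in A} psibar_i psi_i  (factors are even, so order is irrelevant).\<close>
definition tau :: "'a::linorder set \<Rightarrow> 'a grass" where
  "tau A = gprodl (map (\<lambda>i. gmul (psibar i) (psi i)) (sorted_list_of_set A))"

definition fA :: "complex \<Rightarrow> 'a::linorder set \<Rightarrow> 'a grass" where
  "fA lam A = gadd (gadd (gsmul (lam * (1 - of_nat (card A))) (tau A))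
                         (gsum (\<lambda>i. tau (A - {i})) A))
                   (gsmul (-1) (gsum (\<lambda>(i, j). gmul (gmul (psibar i) (psi j)) (tau (A - {i, j})))
                                     {(i, j). i \<in> A \<and> j \<in> A \<and> i \<noteq> j}))"

text \<open>Berezin (left) derivative / integration with respect to a single generator:
  int d g  g * m = m  for monomials m not containing g.\<close>
definition gderiv :: "'a::linorder \<times> bool \<Rightarrow> 'a grass \<Rightarrow> 'a grass" where
  "gderiv g x = (\<lambda>T. if g \<in> T then 0 else (-1) ^ card {h \<in> T. h < g} * x (insert g T))"

text \<open>int dpsi_i dpsibar_i F  (inner integration over psibar_i first), so that
  int dpsi_i dpsibar_i psibar_i psi_i = 1.\<close>
definition pair_int :: "'a::linorder \<Rightarrow> 'a grass \<Rightarrow> 'a grass" where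
  "pair_int i F = gderiv (i, False) (gderiv (i, True) F)"

definition berezin :: "'a::linorder set \<Rightarrow> 'a grass \<Rightarrow> 'a grass" where
  "berezin V F = foldr pair_int (sorted_list_of_set V) F"

text \<open>int D_{V,t}(psi,psibar) F, with D_{V,t} = prod_i dpsi_i dpsibar_i exp(t_i psibar_i psi_i);
  the result is an element of the algebra (a scalar multiple of 1 when F lives in the
  algebra generated by V); we return its scalar part.\<close>
definition measure_int :: "'a::linorder set \<Rightarrow> ('a \<Rightarrow> complex) \<Rightarrow> 'a grass \<Rightarrow> complex" where
  "measure_int V t F =
     berezin V (gmul (gprodl (map (\<lambda>i. gexp (gsmul (t i) (gmul (psibar i) (psi i))))
                                  (sorted_list_of_set V))) F) {}"

end

theory Submission
  imports Defs
begin


definition DD :: "'a set \<Rightarrow> ('a \<times> bool) set" where "DD A = A \<times> UNIV"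

definition diag :: "'a grass \<Rightarrow> bool" where
  "diag x \<longleftrightarrow> (\<forall>S. x S \<noteq> 0 \<longrightarrow> (\<exists>A. S = DD A))"

definition supp_in :: "'a grass \<Rightarrow> ('a \<times> bool) set \<Rightarrow> bool" where
  "supp_in x G \<longleftrightarrow> (\<forall>S. x S \<noteq> 0 \<longrightarrow> S \<subseteq> G)"

lemma DD_inj[simp]: "DD A = DD B \<longleftrightarrow> A = B"
  unfolding DD_def by blast

lemma DD_simps: "DD {} = {}" "DD (A \<union> B) = DD A \<union> DD B" "DD (A - B) = DD A - DD B"
  "DD (A \<inter> B) = DD A \<inter> DD B" "DD (insert i A) = {(i,False),(i,True)} \<union> DD A"
  unfolding DD_def by auto

lemma mem_DD[simp]: "(x \<in> DD A) = (fst x \<in> A)"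
  by (cases x) (auto simp: DD_def)

lemma finite_DD[simp]: "finite (DD A) = finite A"
  unfolding DD_def by (auto simp: finite_cartesian_product_iff)

lemma DD_sub[simp]: "DD A \<subseteq> DD B \<longleftrightarrow> A \<subseteq> B"
  unfolding DD_def by auto

lemma gmul_nz:
  assumes "gmul x y T \<noteq> 0" shows "\<exists>S\<subseteq>T. x S \<noteq> 0 \<and> y (T - S) \<noteq> 0"
proof (rule ccontr)
  assume "\<not> ?thesis"
  hence "gmul x y T = 0" unfolding gmul_def by (intro sum.neutral) auto
  with assms show False by simp
qed

lemma diag_gmul: "diag x \<Longrightarrow> diag y \<Longrightarrow> diag (gmul x y)"
  unfolding diag_def
proof (intro allI impI)
  fix S assume x: "\<forall>S. x S \<noteq> 0 \<longrightarrow> (\<exists>A. S = DD A)" and y: "\<forall>S. y S \<noteq> 0 \<longrightarrow> (\<exists>A. S = DD A)"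
    and nz: "gmul x y S \<noteq> 0"
  obtain R where R: "R \<subseteq> S" "x R \<noteq> 0" "y (S - R) \<noteq> 0" using gmul_nz[OF nz] by blast
  obtain A where A: "R = DD A" using x R(2) by blast
  obtain B where B: "S - R = DD B" using y R(3) by blast
  note AB = A B
  have "S = DD A \<union> DD B" using R(1) AB by blast
  hence "S = DD (A \<union> B)" by (simp add: DD_simps(2))
  thus "\<exists>A. S = DD A" by blast
qed

lemma supp_gmul: "supp_in x G1 \<Longrightarrow> supp_in y G2 \<Longrightarrow> supp_in (gmul x y) (G1 \<union> G2)"
  unfolding supp_in_def
proof (intro allI impI)
  fix S assume x: "\<forall>S. x S \<noteq> 0 \<longrightarrow> S \<subseteq> G1" and y: "\<forall>S. y S \<noteq> 0 \<longrightarrow> S \<subseteq> G2"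
    and nz: "gmul x y S \<noteq> 0"
  obtain R where R: "R \<subseteq> S" "x R \<noteq> 0" "y (S - R) \<noteq> 0" using gmul_nz[OF nz] by blast
  have "R \<subseteq> G1" "S - R \<subseteq> G2" using x y R by auto
  thus "S \<subseteq> G1 \<union> G2" by blast
qed

lemma supp_mono: "supp_in x G \<Longrightarrow> G \<subseteq> H \<Longrightarrow> supp_in x H"
  unfolding supp_in_def by blast

lemma gsign_DD:
  assumes "A \<inter> B = {}" shows "gsign (DD A) (DD B) = 1"
proof -
  let ?X = "{(i,j). i \<in> A \<and> j \<in> B \<and> j < i} \<times> (UNIV :: (bool \<times> bool) set)"
  let ?h = "\<lambda>((i,j),(b1,b2)). ((i,b1),(j,b2))"
  have eq: "{(a, b). a \<in> DD A \<and> b \<in> DD B \<and> b < a} = ?h ` ?X"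
  proof (rule set_eqI, rule iffI)
    fix p assume "p \<in> {(a, b). a \<in> DD A \<and> b \<in> DD B \<and> b < a}"
    then obtain i b1 j b2 where p: "p = ((i,b1),(j,b2))" "i \<in> A" "j \<in> B" "(j,b2) < (i,b1)"
      by (auto simp: DD_def)
    have "i \<noteq> j" using p assms by blast
    hence "j < i" using p(4) by (auto simp: less_prod_def)
    thus "p \<in> ?h ` ?X" using p by (auto intro!: image_eqI[where x="((i,j),(b1,b2))"])
  next
    fix p assume "p \<in> ?h ` ?X"
    thus "p \<in> {(a, b). a \<in> DD A \<and> b \<in> DD B \<and> b < a}"
      by (auto simp: DD_def less_prod_def)
  qed
  have inj: "inj_on ?h ?X" by (auto simp: inj_on_def)
  have "card (?h ` ?X) = card ?X" using card_image[OF inj] .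
  also have "\<dots> = card {(i,j). i \<in> A \<and> j \<in> B \<and> j < i} * 4"
  proof -
    have "(UNIV :: (bool \<times> bool) set) = {(False,False),(False,True),(True,False),(True,True)}" by auto
    hence "card (UNIV :: (bool \<times> bool) set) = card {(False,False),(False,True),(True,False),(True,True)}" by (rule arg_cong)
    also have "\<dots> = 4" by simp
    finally have "card (UNIV :: (bool \<times> bool) set) = 4" .
    thus ?thesis by (simp add: card_cartesian_product)
  qed
  finally have "even (card {(a, b). a \<in> DD A \<and> b \<in> DD B \<and> b < a})" using eq by simp
  thus ?thesis unfolding gsign_def by simp
qed



lemma gmul_diag_DD:
  assumes dx: "diag x" and fW: "finite W"
  shows "gmul x y (DD W) = (\<Sum>A\<in>Pow W. x (DD A) * y (DD (W - A)))"
proof -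
  let ?g = "\<lambda>S. gsign S (DD W - S) * x S * y (DD W - S)"
  have "gmul x y (DD W) = (\<Sum>S\<in>Pow (DD W). ?g S)" unfolding gmul_def by simp
  also have "\<dots> = (\<Sum>S\<in>DD ` Pow W. ?g S)"
  proof (rule sum.mono_neutral_right)
    show "finite (Pow (DD W))" using fW by simp
    show "DD ` Pow W \<subseteq> Pow (DD W)" by auto
    show "\<forall>S\<in>Pow (DD W) - DD ` Pow W. ?g S = 0"
    proof
      fix S assume S: "S \<in> Pow (DD W) - DD ` Pow W"
      show "?g S = 0"
      proof (cases "x S = 0")
        case False
        then obtain A where A: "S = DD A" using dx unfolding diag_def by blast
        hence "A \<subseteq> W" using S by auto
        thus ?thesis using S A by auto
      qed simp
    qed
  qed
  also have "\<dots> = (\<Sum>A\<in>Pow W. ?g (DD A))"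
    by (subst sum.reindex) (auto simp: inj_on_def)
  also have "\<dots> = (\<Sum>A\<in>Pow W. x (DD A) * y (DD (W - A)))"
  proof (rule sum.cong[OF refl])
    fix A assume "A \<in> Pow W"
    have e: "DD W - DD A = DD (W - A)" by (simp add: DD_simps)
    have "gsign (DD A) (DD (W - A)) = 1" by (rule gsign_DD) auto
    thus "?g (DD A) = x (DD A) * y (DD (W - A))" by (simp add: e)
  qed
  finally show ?thesis .
qed

lemma gmul_sep:
  assumes sx: "supp_in x (DD A)" and sy: "supp_in y (DD B)" and AB: "A \<inter> B = {}"
    and fW: "finite W"
  shows "gmul x y (DD W) = x (DD (W \<inter> A)) * y (DD (W - A))"
proof -
  let ?g = "\<lambda>S. gsign S (DD W - S) * x S * y (DD W - S)"
  let ?S0 = "DD (W \<inter> A)"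
  have "gmul x y (DD W) = (\<Sum>S\<in>Pow (DD W). ?g S)" unfolding gmul_def by simp
  also have "\<dots> = ?g ?S0 + (\<Sum>S\<in>Pow (DD W) - {?S0}. ?g S)"
    by (rule sum.remove) (use fW in \<open>auto simp: DD_def\<close>)
  also have "(\<Sum>S\<in>Pow (DD W) - {?S0}. ?g S) = 0"
  proof (rule sum.neutral, rule ballI)
    fix S assume S: "S \<in> Pow (DD W) - {?S0}"
    show "?g S = 0"
    proof (rule ccontr)
      assume "?g S \<noteq> 0"
      hence "x S \<noteq> 0" "y (DD W - S) \<noteq> 0" by auto
      hence 1: "S \<subseteq> DD A" and 2: "DD W - S \<subseteq> DD B" using sx sy unfolding supp_in_def by auto
      have "S = ?S0"
      proof
        show "S \<subseteq> ?S0" using 1 S by (auto simp: DD_def)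
        show "?S0 \<subseteq> S"
        proof
          fix p assume p: "p \<in> ?S0"
          show "p \<in> S"
          proof (rule ccontr)
            assume "p \<notin> S"
            hence "p \<in> DD B" using 2 p by (auto simp: DD_def)
            thus False using p AB by auto
          qed
        qed
      qed
      thus False using S by simp
    qed
  qed
  also have "DD W - ?S0 = DD (W - A)" by (auto simp: DD_def)
  moreover have "gsign ?S0 (DD (W - A)) = 1" by (rule gsign_DD) auto
  ultimately show ?thesis by simp
qed

lemma gone_DD: "gone (DD W) = (if W = {} then 1 else 0)"
  by (auto simp: gone_def DD_def)

lemma diag_gone: "diag gone"
  unfolding diag_def gone_def by (auto intro: exI[where x="{}"] simp: DD_def)

lemma supp_gone: "supp_in gone G"
  unfolding supp_in_def gone_def by auto

lemma gmul_gen: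
  "gmul (gen a) (gen b) T = (if T = {a, b} \<and> a \<noteq> b then gsign {a} {b} else 0)"
proof -
  let ?g = "\<lambda>S. gsign S (T - S) * gen a S * gen b (T - S)"
  have z: "?g S = 0" if "\<not> (S = {a} \<and> T - S = {b})" for S
    using that by (auto simp: gen_def)
  show ?thesis
  proof (cases "T = {a, b} \<and> a \<noteq> b")
    case True
    have "gmul (gen a) (gen b) T = ?g {a} + (\<Sum>S\<in>Pow T - {{a}}. ?g S)"
      unfolding gmul_def by (rule sum.remove) (use True in auto)
    also have "(\<Sum>S\<in>Pow T - {{a}}. ?g S) = 0"
      by (rule sum.neutral) (use z in auto)
    finally show ?thesis using True by (auto simp: gen_def)
  next
    case False
    have "gmul (gen a) (gen b) T = 0" unfolding gmul_def
    proof (rule sum.neutral, rule ballI)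
      fix S assume "S \<in> Pow T"
      show "?g S = 0"
      proof (rule z, rule notI)
        assume "S = {a} \<and> T - S = {b}"
        hence "T = {a, b} \<and> a \<noteq> b" using \<open>S \<in> Pow T\<close> by auto
        thus False using False by simp
      qed
    qed
    thus ?thesis by (simp only: if_not_P[OF False])
  qed
qed

lemma gsign_single: "gsign {a} {b} = (if b < a then -1 else 1)"
proof -
  have "{(x, y). x \<in> {a} \<and> y \<in> {b} \<and> y < x} = (if b < a then {(a,b)} else {})" by auto
  thus ?thesis unfolding gsign_def by simp
qed

definition q :: "'a::linorder \<Rightarrow> 'a grass" where "q i = gmul (psibar i) (psi i)"

lemma q_val: "q i T = (if T = DD {i} then -1 else 0)"
proof -
  have e: "DD {i} = {(i, True), (i, False)}" by (auto simp: DD_def)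
  have "(i, False) < (i, True)" by (simp add: less_prod_def)
  thus ?thesis unfolding q_def psibar_def psi_def gmul_gen e by (simp add: gsign_single)
qed

lemma diag_q: "diag (q i)"
  unfolding diag_def q_val by auto

lemma supp_q: "supp_in (q i) (DD {i})"
  unfolding supp_in_def q_val by auto



lemma tauL:
  assumes "distinct L"
  shows "diag (foldr gmul (map q L) gone) \<and> supp_in (foldr gmul (map q L) gone) (DD (set L)) \<and>
    (\<forall>W. finite W \<longrightarrow> foldr gmul (map q L) gone (DD W) = (if W = set L then (-1) ^ length L else 0))"
  using assms
proof (induction L)
  case Nil
  then show ?case by (auto simp: diag_gone supp_gone gone_DD)
next
  case (Cons a L)
  let ?P = "foldr gmul (map q L) gone"
  have IH: "diag ?P" "supp_in ?P (DD (set L))"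
    "\<And>W. finite W \<Longrightarrow> ?P (DD W) = (if W = set L then (-1) ^ length L else 0)"
    using Cons by auto
  have aL: "a \<notin> set L" using Cons by simp
  have d: "diag (gmul (q a) ?P)" by (rule diag_gmul[OF diag_q IH(1)])
  have s: "supp_in (gmul (q a) ?P) (DD (set (a # L)))"
    using supp_gmul[OF supp_q IH(2), of a] by (simp add: DD_simps(2)[symmetric])
  have v: "gmul (q a) ?P (DD W) = (if W = set (a # L) then (-1) ^ length (a # L) else 0)"
    if fW: "finite W" for W
  proof -
    have "gmul (q a) ?P (DD W) = (\<Sum>B\<in>Pow W. q a (DD B) * ?P (DD (W - B)))"
      by (rule gmul_diag_DD[OF diag_q fW])
    also have "\<dots> = (\<Sum>B\<in>Pow W. if B = {a} then - ?P (DD (W - {a})) else 0)"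
      by (rule sum.cong) (auto simp: q_val)
    also have "\<dots> = (if a \<in> W then - ?P (DD (W - {a})) else 0)"
      using fW by simp
    also have "\<dots> = (if W = set (a # L) then (-1) ^ length (a # L) else 0)"
    proof (cases "a \<in> W")
      case True
      have "(W - {a} = set L) = (W = set (a # L))" using True aL by auto
      then show ?thesis using True IH(3)[of "W - {a}"] fW by simp
    next
      case False
      then show ?thesis by auto
    qed
    finally show ?thesis .
  qed
  show ?case using d s v by simp
qed

lemma tau_eq: "tau A = foldr gmul (map q (sorted_list_of_set A)) gone"
  unfolding tau_def gprodl_def q_def by simp

lemma tau_props:
  assumes "finite A"
  shows "diag (tau A)" "supp_in (tau A) (DD A)"
    "finite W \<Longrightarrow> tau A (DD W) = (if W = A then (-1) ^ card A else 0)"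
  using tauL[of "sorted_list_of_set A"] assms unfolding tau_eq by auto

lemma gmul_gone:
  assumes "\<And>T. infinite T \<Longrightarrow> x T = 0"
  shows "gmul x gone = x"
proof
  fix T
  show "gmul x gone T = x T"
  proof (cases "finite T")
    case True
    let ?g = "\<lambda>S. gsign S (T - S) * x S * gone (T - S)"
    have "gmul x gone T = ?g T + (\<Sum>S\<in>Pow T - {T}. ?g S)"
      unfolding gmul_def by (rule sum.remove) (use True in auto)
    also have "(\<Sum>S\<in>Pow T - {T}. ?g S) = 0"
      by (rule sum.neutral) (auto simp: gone_def)
    finally show ?thesis by (simp add: gone_def gsign_def)
  next
    case False
    then show ?thesis using assms unfolding gmul_def by simp
  qed
qed

lemma gexp_q:
  fixes c :: complex and i :: "'a::linorder"
  shows "gexp (gsmul c (q i)) = gadd gone (gsmul c (q i))"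
proof -
  define x where "x = gsmul c (q i)"
  have xv: "x T = (if T = DD {i} then - c else 0)" for T
    unfolding x_def gsmul_def q_val by simp
  have p0: "gpow x 0 = gone" unfolding gpow_def gprodl_def by simp
  have xg: "gmul x gone = x"
    by (rule gmul_gone) (auto simp: xv)
  have p1: "gpow x (Suc 0) = x" unfolding gpow_def gprodl_def using xg by simp
  have xx: "gmul x x = gzero"
  proof
    fix T show "gmul x x T = gzero T"
    proof (rule ccontr)
      assume "gmul x x T \<noteq> gzero T"
      then obtain S where S: "S \<subseteq> T" "x S \<noteq> 0" "x (T - S) \<noteq> 0"
        using gmul_nz unfolding gzero_def by blast
      hence "S = DD {i}" "T - S = DD {i}" by (auto simp: xv split: if_splits)
      thus False by (auto simp: DD_def)
    qed
  qed
  have p2: "gpow x 2 = gzero"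
    unfolding gpow_def gprodl_def using xg xx by (simp add: numeral_2_eq_2)
  have g0: "gone \<noteq> (gzero :: 'a grass)"
  proof
    assume "gone = (gzero :: 'a grass)"
    hence "(gone :: 'a grass) {} = (gzero :: 'a grass) {}" by (rule fun_cong)
    thus False by (simp add: gone_def gzero_def)
  qed
  let ?m = "LEAST m. gpow x m = gzero"
  have m2: "?m \<le> 2" by (rule Least_le) (rule p2)
  have mz: "gpow x ?m = gzero" by (rule LeastI) (rule p2)
  have m0: "?m \<noteq> 0" using mz p0 g0 by auto
  have "gexp x = gadd gone x"
  proof (cases "?m = 1")
    case True
    hence xz: "x = gzero" using mz p1 by (simp add: One_nat_def)
    have "gexp x = gsum (\<lambda>k. gsmul (1 / fact k) (gpow x k)) {..<1}"
      unfolding gexp_def using True by simp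
    also have "\<dots> = gone" by (simp add: gsum_def gsmul_def p0)
    finally show ?thesis using xz by (simp add: gadd_def gzero_def)
  next
    case False
    hence "?m = 2" using m2 m0 by linarith
    hence "gexp x = gsum (\<lambda>k. gsmul (1 / fact k) (gpow x k)) {..<2}"
      unfolding gexp_def by simp
    also have "\<dots> = gadd gone x"
      by (simp add: gsum_def gsmul_def gadd_def p0 p1 numeral_2_eq_2)
    finally show ?thesis .
  qed
  thus ?thesis unfolding x_def .
qed

definition ee :: "('a::linorder \<Rightarrow> complex) \<Rightarrow> 'a \<Rightarrow> 'a grass" where
  "ee t i = gexp (gsmul (t i) (gmul (psibar i) (psi i)))"

lemma ee_val: "ee t i T = gone T + (if T = DD {i} then - t i else 0)"
  unfolding ee_def q_def[symmetric] gexp_q by (simp add: gadd_def gsmul_def q_val)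

lemma diag_ee: "diag (ee t i)"
  unfolding diag_def ee_val by (auto simp: gone_def intro: exI[where x="{}"] simp: DD_def)

lemma EL:
  assumes "distinct L"
  shows "diag (foldr gmul (map (ee t) L) gone) \<and>
    (\<forall>A. finite A \<longrightarrow> foldr gmul (map (ee t) L) gone (DD A) = (if A \<subseteq> set L then (\<Prod>j\<in>A. - t j) else 0))"
  using assms
proof (induction L)
  case Nil
  then show ?case by (auto simp: diag_gone gone_DD)
next
  case (Cons a L)
  let ?P = "foldr gmul (map (ee t) L) gone"
  have IH: "diag ?P"
    "\<And>A. finite A \<Longrightarrow> ?P (DD A) = (if A \<subseteq> set L then (\<Prod>j\<in>A. - t j) else 0)"
    using Cons by auto
  have aL: "a \<notin> set L" using Cons by simp
  have d: "diag (gmul (ee t a) ?P)" by (rule diag_gmul[OF diag_ee IH(1)])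
  have v: "gmul (ee t a) ?P (DD A) = (if A \<subseteq> set (a # L) then (\<Prod>j\<in>A. - t j) else 0)"
    if fA: "finite A" for A
  proof -
    have "gmul (ee t a) ?P (DD A) = (\<Sum>B\<in>Pow A. ee t a (DD B) * ?P (DD (A - B)))"
      by (rule gmul_diag_DD[OF diag_ee fA])
    also have "\<dots> = (\<Sum>B\<in>Pow A. (if B = {} then ?P (DD A) else 0) +
                                 (if B = {a} then - t a * ?P (DD (A - {a})) else 0))"
      by (rule sum.cong) (auto simp: ee_val gone_DD algebra_simps)
    also have "\<dots> = ?P (DD A) + (if a \<in> A then - t a * ?P (DD (A - {a})) else 0)"
      using fA by (simp add: sum.distrib)
    also have "\<dots> = (if A \<subseteq> set (a # L) then (\<Prod>j\<in>A. - t j) else 0)"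
    proof (cases "a \<in> A")
      case True
      have "\<not> A \<subseteq> set L" using True aL by auto
      moreover have "(A - {a} \<subseteq> set L) = (A \<subseteq> set (a # L))" using True by auto
      moreover have "(\<Prod>j\<in>A. - t j) = - t a * (\<Prod>j\<in>A - {a}. - t j)"
        using True fA by (simp add: prod.remove)
      ultimately show ?thesis using True IH(2)[of "A - {a}"] IH(2)[of A] fA by simp
    next
      case False
      have "(A \<subseteq> set L) = (A \<subseteq> set (a # L))" using False by auto
      then show ?thesis using False IH(2)[of A] fA by simp
    qed
    finally show ?thesis .
  qed
  show ?case using d v by simp
qed

lemma pair_int_val:
  assumes "finite T"
  shows "pair_int i H T = (if T \<inter> DD {i} = {} then - H (T \<union> DD {i}) else 0)"
proof (cases "(i, False) \<in> T \<or> (i, True) \<in> T")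
  case True
  then show ?thesis unfolding pair_int_def gderiv_def by (auto simp: DD_def)
next
  case False
  let ?K = "{h \<in> T. h < (i, False)}"
  have e: "{h \<in> insert (i, False) T. h < (i, True)} = insert (i, False) ?K"
    by (auto simp: less_prod_def)
  have e2: "{h. (h = (i, False) \<or> h \<in> T) \<and> h < (i, True)} = insert (i, False) ?K"
    by (auto simp: less_prod_def)
  have fK: "finite ?K" using assms by simp
  have c2: "card {h. (h = (i, False) \<or> h \<in> T) \<and> h < (i, True)} = Suc (card ?K)"
    unfolding e2 using fK by simp
  have c: "card {h \<in> insert (i, False) T. h < (i, True)} = Suc (card ?K)"
    unfolding e using fK by simp
  have sgn: "((-1::complex) ^ card ?K) * (-1) ^ Suc (card ?K) = -1"
    by (simp add: power_mult_distrib[symmetric])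
  have ins: "insert (i, True) (insert (i, False) T) = T \<union> DD {i}" by (auto simp: DD_def)
  have dj: "T \<inter> DD {i} = {}"
  proof -
    have "(i, b) \<notin> T" for b using False by (cases b) auto
    thus ?thesis by (auto simp: DD_def)
  qed
  show ?thesis using False
    unfolding pair_int_def gderiv_def
    by (simp add: c c2 ins dj mult.assoc[symmetric] sgn)
qed

lemma berezinL:
  assumes "distinct L" "finite T"
  shows "foldr pair_int L G T = (if T \<inter> DD (set L) = {} then (-1) ^ length L * G (T \<union> DD (set L)) else 0)"
  using assms
proof (induction L arbitrary: T)
  case Nil
  then show ?case by (simp add: DD_simps)
next
  case (Cons a L)
  have aL: "a \<notin> set L" using Cons by simp
  have f2: "finite (T \<union> DD {a})" using Cons by simp
  have "foldr pair_int (a # L) G T = pair_int a (foldr pair_int L G) T" by simp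
  also have "\<dots> = (if T \<inter> DD {a} = {} then - foldr pair_int L G (T \<union> DD {a}) else 0)"
    by (rule pair_int_val) (use Cons in simp)
  also have "\<dots> = (if T \<inter> DD (set (a # L)) = {} then (-1) ^ length (a # L) * G (T \<union> DD (set (a # L))) else 0)"
  proof -
    have IH: "foldr pair_int L G (T \<union> DD {a}) = (if (T \<union> DD {a}) \<inter> DD (set L) = {} then (-1) ^ length L * G (T \<union> DD {a} \<union> DD (set L)) else 0)"
      using Cons f2 by simp
    have "DD {a} \<inter> DD (set L) = {}" using aL by (auto simp: DD_def)
    hence e1: "((T \<union> DD {a}) \<inter> DD (set L) = {}) = (T \<inter> DD (set L) = {})" by blast
    have e2: "DD (set (a # L)) = DD {a} \<union> DD (set L)" by (auto simp: DD_def)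
    show ?thesis unfolding IH e1 e2 by (auto simp: Un_assoc)
  qed
  finally show ?case .
qed



lemma supp_gadd: "supp_in x G \<Longrightarrow> supp_in y G \<Longrightarrow> supp_in (gadd x y) G"
  unfolding supp_in_def gadd_def by (metis add.right_neutral add_0)

lemma supp_gsmul: "supp_in x G \<Longrightarrow> supp_in (gsmul c x) G"
  unfolding supp_in_def gsmul_def by auto

lemma supp_gsum: "(\<And>a. a \<in> I \<Longrightarrow> supp_in (F a) G) \<Longrightarrow> supp_in (gsum F I) G"
  unfolding supp_in_def gsum_def
proof (intro allI impI)
  fix S assume h: "\<And>a. a \<in> I \<Longrightarrow> \<forall>S. F a S \<noteq> 0 \<longrightarrow> S \<subseteq> G" and nz: "(\<Sum>a\<in>I. F a S) \<noteq> 0"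
  obtain a where "a \<in> I" "F a S \<noteq> 0" using nz sum.neutral by metis
  thus "S \<subseteq> G" using h by blast
qed

lemma gen2: "gmul (psibar i) (psi j) S \<noteq> 0 \<Longrightarrow> S = {(i, True), (j, False)}"
  unfolding psibar_def psi_def gmul_gen by (auto split: if_splits)

lemma offdiag_zero:
  assumes ij: "i \<noteq> j" and fR: "finite R"
  shows "gmul (gmul (psibar i) (psi j)) (tau R) (DD W) = 0"
proof (rule ccontr)
  assume "gmul (gmul (psibar i) (psi j)) (tau R) (DD W) \<noteq> 0"
  then obtain S where S: "S \<subseteq> DD W" "gmul (psibar i) (psi j) S \<noteq> 0" "tau R (DD W - S) \<noteq> 0"
    using gmul_nz by blast
  have S2: "S = {(i, True), (j, False)}" using gen2[OF S(2)] .
  obtain R' where R': "DD W - S = DD R'" using tau_props(1)[OF fR] S(3) unfolding diag_def by blast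
  have "(i, True) \<in> DD W" using S(1) S2 by auto
  hence "(i, False) \<in> DD W" by simp
  moreover have "(i, False) \<notin> S" using S2 ij by auto
  ultimately have "(i, False) \<in> DD R'" using R' by blast
  hence "(i, True) \<in> DD R'" by simp
  thus False using R' S2 by blast
qed

lemma supp_offdiag:
  assumes "i \<in> A" "j \<in> A" "R \<subseteq> A" "finite R"
  shows "supp_in (gmul (gmul (psibar i) (psi j)) (tau R)) (DD A)"
proof -
  have "supp_in (gmul (psibar i) (psi j)) (DD A)"
    unfolding supp_in_def using gen2 assms(1,2) by fastforce
  moreover have "supp_in (tau R) (DD A)"
    using supp_mono[OF tau_props(2)[OF assms(4)]] assms(3) by simp
  ultimately show ?thesis using supp_gmul by fastforce
qed

lemma supp_fA:
  assumes "finite A" shows "supp_in (fA lam A) (DD A)"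
  unfolding fA_def
proof (intro supp_gadd supp_gsmul supp_gsum)
  show "supp_in (tau A) (DD A)" using tau_props(2)[OF assms] .
  fix i assume "i \<in> A"
  show "supp_in (tau (A - {i})) (DD A)"
    using tau_props(2)[of "A - {i}"] assms by (auto intro: supp_mono simp: DD_def)
next
  fix p assume p: "p \<in> {(i, j). i \<in> A \<and> j \<in> A \<and> i \<noteq> j}"
  then obtain i j where "p = (i, j)" "i \<in> A" "j \<in> A" by auto
  thus "supp_in ((\<lambda>(i, j). gmul (gmul (psibar i) (psi j)) (tau (A - {i, j}))) p) (DD A)"
    using supp_offdiag[of i A j "A - {i, j}"] assms by auto
qed

lemma fA_val:
  assumes fA: "finite A" and fW: "finite W"
  shows "fA lam A (DD W) = lam * (1 - of_nat (card A)) * (if W = A then (-1) ^ card A else 0)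
     + (\<Sum>i\<in>A. if W = A - {i} then (-1) ^ card (A - {i}) else 0)"
proof -
  have z: "(\<Sum>p\<in>{(i, j). i \<in> A \<and> j \<in> A \<and> i \<noteq> j}.
      (\<lambda>(i, j). gmul (gmul (psibar i) (psi j)) (tau (A - {i, j}))) p (DD W)) = 0"
  proof (rule sum.neutral, rule ballI)
    fix p assume "p \<in> {(i, j). i \<in> A \<and> j \<in> A \<and> i \<noteq> j}"
    then obtain i j where "p = (i, j)" "i \<noteq> j" by auto
    thus "(\<lambda>(i, j). gmul (gmul (psibar i) (psi j)) (tau (A - {i, j}))) p (DD W) = 0"
      using offdiag_zero[of i j "A - {i, j}"] fA by auto
  qed
  have "fA lam A (DD W) = lam * (1 - of_nat (card A)) * tau A (DD W) + (\<Sum>i\<in>A. tau (A - {i}) (DD W))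
     - (\<Sum>p\<in>{(i, j). i \<in> A \<and> j \<in> A \<and> i \<noteq> j}.
      (\<lambda>(i, j). gmul (gmul (psibar i) (psi j)) (tau (A - {i, j}))) p (DD W))"
    unfolding fA_def gadd_def gsmul_def gsum_def by simp
  also have "\<dots> = lam * (1 - of_nat (card A)) * tau A (DD W) + (\<Sum>i\<in>A. tau (A - {i}) (DD W))"
    using z by simp
  finally show ?thesis using tau_props(3)[OF fA fW] tau_props(3)[of "A - {_}" W] fA fW by simp
qed


lemma FL:
  assumes "distinct as" "\<forall>a\<in>set as. finite (C a) \<and> supp_in (g a) (DD (C a))"
    "\<forall>a\<in>set as. \<forall>b\<in>set as. a \<noteq> b \<longrightarrow> C a \<inter> C b = {}"
  shows "supp_in (foldr gmul (map g as) gone) (DD (\<Union>(C ` set as))) \<and>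
    (\<forall>W. finite W \<longrightarrow> W \<subseteq> \<Union>(C ` set as) \<longrightarrow>
        foldr gmul (map g as) gone (DD W) = (\<Prod>a\<in>set as. g a (DD (W \<inter> C a))))"
  using assms
proof (induction as)
  case Nil
  then show ?case by (auto simp: supp_gone gone_DD)
next
  case (Cons a as)
  let ?P = "foldr gmul (map g as) gone"
  let ?U = "\<Union>(C ` set as)"
  have p1: "distinct as" using Cons.prems(1) by simp
  have p2: "\<forall>a\<in>set as. finite (C a) \<and> supp_in (g a) (DD (C a))" using Cons.prems(2) by simp
  have p3: "\<forall>a\<in>set as. \<forall>b\<in>set as. a \<noteq> b \<longrightarrow> C a \<inter> C b = {}" using Cons.prems(3) by simp
  note IHc = Cons.IH[OF p1 p2 p3]
  have IH: "supp_in ?P (DD ?U)"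
    "\<And>W. finite W \<Longrightarrow> W \<subseteq> ?U \<Longrightarrow> ?P (DD W) = (\<Prod>b\<in>set as. g b (DD (W \<inter> C b)))"
    using IHc by blast+
  have aL: "a \<notin> set as" using Cons.prems(1) by simp
  have sa: "supp_in (g a) (DD (C a))" using Cons.prems(2) by simp
  have djb: "\<And>b. b \<in> set as \<Longrightarrow> C a \<inter> C b = {}"
  proof -
    fix b assume b: "b \<in> set as"
    hence "a \<noteq> b" using aL by auto
    thus "C a \<inter> C b = {}" using Cons.prems(3) b by simp
  qed
  have dj: "C a \<inter> ?U = {}" using djb by blast
  have s: "supp_in (gmul (g a) ?P) (DD (\<Union>(C ` set (a # as))))"
    using supp_gmul[OF sa IH(1)] by (simp add: DD_simps(2)[symmetric])
  have v: "gmul (g a) ?P (DD W) = (\<Prod>b\<in>set (a # as). g b (DD (W \<inter> C b)))"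
    if fW: "finite W" and WU: "W \<subseteq> \<Union>(C ` set (a # as))" for W
  proof -
    have "gmul (g a) ?P (DD W) = g a (DD (W \<inter> C a)) * ?P (DD (W - C a))"
      by (rule gmul_sep[OF sa IH(1) dj fW])
    also have "?P (DD (W - C a)) = (\<Prod>b\<in>set as. g b (DD ((W - C a) \<inter> C b)))"
      using IH(2)[of "W - C a"] fW WU by auto
    also have "\<dots> = (\<Prod>b\<in>set as. g b (DD (W \<inter> C b)))"
    proof (rule prod.cong[OF refl])
      fix b assume "b \<in> set as"
      hence "C a \<inter> C b = {}" by (rule djb)
      hence "(W - C a) \<inter> C b = W \<inter> C b" by blast
      thus "g b (DD ((W - C a) \<inter> C b)) = g b (DD (W \<inter> C b))" by simp
    qed
    finally show ?thesis using aL by simp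
  qed
  show ?case using s v by simp
qed

lemma sum_Pow_Un:
  assumes "finite A" "finite B" "A \<inter> B = {}"
  shows "sum f (Pow (A \<union> B)) = (\<Sum>X\<in>Pow A. \<Sum>Y\<in>Pow B. f (X \<union> Y))"
proof -
  have inj: "inj_on (\<lambda>(X, Y). X \<union> Y) (Pow A \<times> Pow B)"
  proof (rule inj_onI, clarify)
    fix X Y X' Y' assume h: "X \<subseteq> A" "Y \<subseteq> B" "X' \<subseteq> A" "Y' \<subseteq> B" "X \<union> Y = X' \<union> Y'"
    have "X = (X \<union> Y) \<inter> A" using h(1,2) assms(3) by blast
    moreover have "X' = (X' \<union> Y') \<inter> A" using h(3,4) assms(3) by blast
    moreover have "Y = (X \<union> Y) \<inter> B" using h(1,2) assms(3) by blast
    moreover have "Y' = (X' \<union> Y') \<inter> B" using h(3,4) assms(3) by blast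
    ultimately show "X = X' \<and> Y = Y'" using h(5) by metis
  qed
  have img: "(\<lambda>(X, Y). X \<union> Y) ` (Pow A \<times> Pow B) = Pow (A \<union> B)"
  proof
    show "(\<lambda>(X, Y). X \<union> Y) ` (Pow A \<times> Pow B) \<subseteq> Pow (A \<union> B)" by auto
    show "Pow (A \<union> B) \<subseteq> (\<lambda>(X, Y). X \<union> Y) ` (Pow A \<times> Pow B)"
    proof
      fix Z assume "Z \<in> Pow (A \<union> B)"
      hence "Z = (\<lambda>(X, Y). X \<union> Y) (Z \<inter> A, Z \<inter> B)" by auto
      moreover have "(Z \<inter> A, Z \<inter> B) \<in> Pow A \<times> Pow B" by auto
      ultimately show "Z \<in> (\<lambda>(X, Y). X \<union> Y) ` (Pow A \<times> Pow B)" by blast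
    qed
  qed
  have "(\<Sum>X\<in>Pow A. \<Sum>Y\<in>Pow B. f (X \<union> Y)) = (\<Sum>(X, Y)\<in>Pow A \<times> Pow B. f (X \<union> Y))"
    by (rule sum.cartesian_product)
  also have "\<dots> = sum f ((\<lambda>(X, Y). X \<union> Y) ` (Pow A \<times> Pow B))"
    using sum.reindex[OF inj, of f] by (simp add: case_prod_beta o_def)
  finally show ?thesis using img by simp
qed

lemma factor:
  fixes h :: "'b \<Rightarrow> 'a set \<Rightarrow> 'c::comm_semiring_1"
  assumes "distinct as" "\<forall>a\<in>set as. finite (C a)"
    "\<forall>a\<in>set as. \<forall>b\<in>set as. a \<noteq> b \<longrightarrow> C a \<inter> C b = {}"
  shows "(\<Sum>A\<in>Pow (\<Union>(C ` set as)). \<Prod>a\<in>set as. h a (A \<inter> C a))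
     = (\<Prod>a\<in>set as. \<Sum>X\<in>Pow (C a). h a X)"
  using assms
proof (induction as)
  case Nil
  then show ?case by simp
next
  case (Cons a as)
  let ?U = "\<Union>(C ` set as)"
  have p1: "distinct as" using Cons.prems(1) by simp
  have p2: "\<forall>a\<in>set as. finite (C a)" using Cons.prems(2) by simp
  have p3: "\<forall>a\<in>set as. \<forall>b\<in>set as. a \<noteq> b \<longrightarrow> C a \<inter> C b = {}" using Cons.prems(3) by simp
  have IH: "(\<Sum>A\<in>Pow ?U. \<Prod>b\<in>set as. h b (A \<inter> C b)) = (\<Prod>b\<in>set as. \<Sum>X\<in>Pow (C b). h b X)"
    using Cons.IH[OF p1 p2 p3] .
  have aL: "a \<notin> set as" using Cons.prems(1) by simp
  have djb: "\<And>b. b \<in> set as \<Longrightarrow> C a \<inter> C b = {}"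
  proof -
    fix b assume b: "b \<in> set as"
    hence "a \<noteq> b" using aL by auto
    thus "C a \<inter> C b = {}" using Cons.prems(3) b by simp
  qed
  have dj: "C a \<inter> ?U = {}" using djb by blast
  have fU: "finite ?U" using p2 by simp
  have fa: "finite (C a)" using Cons.prems(2) by simp
  have "(\<Sum>A\<in>Pow (\<Union>(C ` set (a # as))). \<Prod>b\<in>set (a # as). h b (A \<inter> C b))
      = (\<Sum>A\<in>Pow (C a \<union> ?U). h a (A \<inter> C a) * (\<Prod>b\<in>set as. h b (A \<inter> C b)))"
    using aL by simp
  also have "\<dots> = (\<Sum>X\<in>Pow (C a). \<Sum>Y\<in>Pow ?U. h a ((X \<union> Y) \<inter> C a) * (\<Prod>b\<in>set as. h b ((X \<union> Y) \<inter> C b)))"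
    by (rule sum_Pow_Un[OF fa fU dj])
  also have "\<dots> = (\<Sum>X\<in>Pow (C a). \<Sum>Y\<in>Pow ?U. h a X * (\<Prod>b\<in>set as. h b (Y \<inter> C b)))"
  proof (intro sum.cong refl)
    fix X Y assume X: "X \<in> Pow (C a)" and Y: "Y \<in> Pow ?U"
    have "(X \<union> Y) \<inter> C a = X" using X Y dj by blast
    moreover have "(X \<union> Y) \<inter> C b = Y \<inter> C b" if "b \<in> set as" for b
    proof -
      have "C a \<inter> C b = {}" using djb that .
      thus ?thesis using X by blast
    qed
    ultimately show "h a ((X \<union> Y) \<inter> C a) * (\<Prod>b\<in>set as. h b ((X \<union> Y) \<inter> C b))
        = h a X * (\<Prod>b\<in>set as. h b (Y \<inter> C b))" by simp
  qed
  also have "\<dots> = (\<Sum>X\<in>Pow (C a). h a X) * (\<Sum>Y\<in>Pow ?U. \<Prod>b\<in>set as. h b (Y \<inter> C b))"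
    by (simp add: sum_product)
  also have "\<dots> = (\<Prod>b\<in>set (a # as). \<Sum>X\<in>Pow (C b). h b X)"
    using IH aL by simp
  finally show ?case .
qed



lemma block:
  fixes t :: "'a::linorder \<Rightarrow> complex" and C :: "'a set"
  assumes fC: "finite C" and ne: "C \<noteq> {}"
  shows "(\<Sum>X\<in>Pow C. (\<Prod>i\<in>C. if i \<in> X then t i else -1) * fA lam C (DD (C - X)))
       = lam + (\<Sum>i\<in>C. t i - lam)"
proof -
  define c where "c = card C"
  define P where "P = (\<lambda>X. \<Prod>i\<in>C. if i \<in> X then t i else (-1::complex))"
  have c1: "card (C - {i}) = c - 1" if "i \<in> C" for i
    using that fC by (simp add: c_def)
  have fv: "fA lam C (DD (C - X)) = lam * (1 - of_nat c) * (if X = {} then (-1) ^ c else 0)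
      + (\<Sum>i\<in>C. if X = {i} then (-1) ^ (c - 1) else 0)" if X: "X \<in> Pow C" for X
  proof -
    have e1: "(C - X = C) = (X = {})" using X by auto
    have e2: "(if C - X = C - {i} then (-1) ^ card (C - {i}) else 0)
        = (if X = {i} then (-1::complex) ^ (c - 1) else 0)" if i: "i \<in> C" for i
    proof -
      have "(C - X = C - {i}) = (X = {i})" using X i by auto
      thus ?thesis using c1[OF i] by simp
    qed
    show ?thesis using fA_val[OF fC, of "C - X" lam] fC e1 e2
      by (simp add: c_def)
  qed
  have "(\<Sum>X\<in>Pow C. P X * fA lam C (DD (C - X)))
      = (\<Sum>X\<in>Pow C. (if X = {} then P {} * (lam * (1 - of_nat c) * (-1) ^ c) else 0)
          + (\<Sum>i\<in>C. if X = {i} then P {i} * (-1) ^ (c - 1) else 0))"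
  proof (rule sum.cong[OF refl])
    fix X assume X: "X \<in> Pow C"
    show "P X * fA lam C (DD (C - X)) = (if X = {} then P {} * (lam * (1 - of_nat c) * (-1) ^ c) else 0)
          + (\<Sum>i\<in>C. if X = {i} then P {i} * (-1) ^ (c - 1) else 0)"
      unfolding fv[OF X] by (simp add: distrib_left sum_distrib_left if_distrib cong: if_cong)
  qed
  also have "\<dots> = P {} * (lam * (1 - of_nat c) * (-1) ^ c)
      + (\<Sum>i\<in>C. P {i} * (-1) ^ (c - 1))"
  proof -
    have s1: "(\<Sum>X\<in>Pow C. (if X = {} then P {} * (lam * (1 - of_nat c) * (-1) ^ c) else 0))
        = P {} * (lam * (1 - of_nat c) * (-1) ^ c)" using fC by simp
    have "(\<Sum>X\<in>Pow C. \<Sum>i\<in>C. if X = {i} then P {i} * (-1) ^ (c - 1) else (0::complex))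
        = (\<Sum>i\<in>C. \<Sum>X\<in>Pow C. if X = {i} then P {i} * (-1) ^ (c - 1) else 0)"
      by (rule sum.swap)
    also have "\<dots> = (\<Sum>i\<in>C. P {i} * (-1) ^ (c - 1))"
      by (rule sum.cong[OF refl]) (use fC in simp)
    finally show ?thesis using s1 by (simp add: sum.distrib)
  qed
  also have "P {} = (-1) ^ c" unfolding P_def c_def by simp
  also have "(\<Sum>i\<in>C. P {i} * (-1) ^ (c - 1)) = (\<Sum>i\<in>C. t i)"
  proof (rule sum.cong[OF refl])
    fix i assume i: "i \<in> C"
    have "P {i} = t i * (-1) ^ (c - 1)"
      unfolding P_def using c1[OF i] by (subst prod.remove[OF fC i]) simp
    thus "P {i} * (-1) ^ (c - 1) = t i"
      by (simp add: mult.assoc power_mult_distrib[symmetric])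
  qed
  also have "(-1) ^ c * (lam * (1 - of_nat c) * (-1) ^ c) = lam * (1 - of_nat c)"
    by (simp add: algebra_simps power_mult_distrib[symmetric])
  also have "lam * (1 - of_nat c) + (\<Sum>i\<in>C. t i) = lam + (\<Sum>i\<in>C. t i - lam)"
    by (simp add: sum_subtractf c_def algebra_simps)
  finally show ?thesis unfolding P_def .
qed



theorem corollary5p3:
  fixes V :: "'a::linorder set" and n :: nat and C :: "nat \<Rightarrow> 'a set"
    and t :: "'a \<Rightarrow> complex" and lam :: "nat \<Rightarrow> complex"
  assumes "finite V"
    and "\<forall>\<alpha><n. C \<alpha> \<noteq> {}"
    and "\<forall>\<alpha><n. \<forall>\<beta><n. \<alpha> \<noteq> \<beta> \<longrightarrow> C \<alpha> \<inter> C \<beta> = {}"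
    and "(\<Union>\<alpha><n. C \<alpha>) = V"
  shows "measure_int V t (gprodl (map (\<lambda>\<alpha>. fA (lam \<alpha>) (C \<alpha>)) [0..<n]))
         = (\<Prod>\<alpha><n. lam \<alpha> + (\<Sum>i\<in>C \<alpha>. t i - lam \<alpha>))"
proof -
  note fV = assms(1)
  define g where "g = (\<lambda>\<alpha>. fA (lam \<alpha>) (C \<alpha>))"
  define F where "F = foldr gmul (map g [0..<n]) gone"
  define L where "L = sorted_list_of_set V"
  define E where "E = foldr gmul (map (ee t) L) gone"
  have sub: "C \<alpha> \<subseteq> V" if "\<alpha> < n" for \<alpha> using assms(4) that by blast
  have finC: "finite (C \<alpha>)" if "\<alpha> < n" for \<alpha> using sub[OF that] fV by (rule finite_subset)
  have setn: "set [0..<n] = {..<n}" by auto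
  have UV: "\<Union>(C ` set [0..<n]) = V" using assms(4) setn by simp
  have dL: "distinct L" and sL: "set L = V" and lL: "length L = card V"
    using fV by (auto simp: L_def)
  have eq1: "(\<lambda>i. gexp (gsmul (t i) (gmul (psibar i) (psi i)))) = ee t"
    by (simp add: fun_eq_iff ee_def)
  have "measure_int V t (gprodl (map (\<lambda>\<alpha>. fA (lam \<alpha>) (C \<alpha>)) [0..<n])) = berezin V (gmul E F) {}"
    unfolding measure_int_def eq1 E_def F_def g_def L_def gprodl_def by simp
  also have "\<dots> = (-1) ^ card V * gmul E F (DD V)"
    unfolding berezin_def L_def[symmetric] using berezinL[OF dL, of "{}" "gmul E F"] sL lL
    by (simp add: DD_simps)
  also have "gmul E F (DD V) = (\<Sum>A\<in>Pow V. E (DD A) * F (DD (V - A)))"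
    by (rule gmul_diag_DD) (use EL[OF dL, of t] fV in \<open>simp_all add: E_def\<close>)
  also have "(-1) ^ card V * \<dots> = (\<Sum>A\<in>Pow V. \<Prod>\<alpha>\<in>set [0..<n].
        (\<lambda>\<alpha> X. (\<Prod>i\<in>C \<alpha>. if i \<in> X then t i else -1) * g \<alpha> (DD (C \<alpha> - X))) \<alpha> (A \<inter> C \<alpha>))"
    unfolding sum_distrib_left
  proof (rule sum.cong[OF refl])
    fix A assume "A \<in> Pow V"
    hence AV: "A \<subseteq> V" by simp
    have fA: "finite A" using AV fV by (rule finite_subset)
    define \<phi> where "\<phi> = (\<lambda>i. if i \<in> A then t i else (-1::complex))"
    have Ev: "E (DD A) = (\<Prod>j\<in>A. - t j)"
      using EL[OF dL, of t] fA AV sL by (simp add: E_def)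
    have Fv: "F (DD (V - A)) = (\<Prod>\<alpha>\<in>set [0..<n]. g \<alpha> (DD ((V - A) \<inter> C \<alpha>)))"
    proof -
      have "\<forall>a\<in>set [0..<n]. finite (C a) \<and> supp_in (g a) (DD (C a))"
      proof
        fix a assume "a \<in> set [0..<n]"
        hence an: "a < n" by simp
        show "finite (C a) \<and> supp_in (g a) (DD (C a))"
          using finC[OF an] supp_fA[OF finC[OF an], of "lam a"] by (simp add: g_def)
      qed
      moreover have "\<forall>a\<in>set [0..<n]. \<forall>b\<in>set [0..<n]. a \<noteq> b \<longrightarrow> C a \<inter> C b = {}"
        using assms(3) by auto
      ultimately show ?thesis
        using FL[of "[0..<n]" C g] UV fV unfolding F_def by auto
    qed
    have a: "(\<Prod>\<alpha>\<in>set [0..<n]. (\<lambda>\<alpha> X. (\<Prod>i\<in>C \<alpha>. if i \<in> X then t i else -1) * g \<alpha> (DD (C \<alpha> - X))) \<alpha> (A \<inter> C \<alpha>))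
        = (\<Prod>\<alpha>\<in>{..<n}. \<Prod>i\<in>C \<alpha>. \<phi> i) * (\<Prod>\<alpha>\<in>set [0..<n]. g \<alpha> (DD ((V - A) \<inter> C \<alpha>)))"
    proof -
      have "(\<Prod>\<alpha>\<in>set [0..<n]. (\<lambda>\<alpha> X. (\<Prod>i\<in>C \<alpha>. if i \<in> X then t i else -1) * g \<alpha> (DD (C \<alpha> - X))) \<alpha> (A \<inter> C \<alpha>))
          = (\<Prod>\<alpha>\<in>{..<n}. (\<Prod>i\<in>C \<alpha>. \<phi> i) * g \<alpha> (DD ((V - A) \<inter> C \<alpha>)))"
        unfolding setn
      proof (rule prod.cong[OF refl])
        fix \<alpha> assume "\<alpha> \<in> {..<n}"
        hence s: "C \<alpha> \<subseteq> V" using sub by simp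
        have "C \<alpha> - A \<inter> C \<alpha> = (V - A) \<inter> C \<alpha>" using s by blast
        moreover have "(\<Prod>i\<in>C \<alpha>. if i \<in> A \<inter> C \<alpha> then t i else -1) = (\<Prod>i\<in>C \<alpha>. \<phi> i)"
          by (rule prod.cong) (auto simp: \<phi>_def)
        ultimately show "(\<lambda>\<alpha> X. (\<Prod>i\<in>C \<alpha>. if i \<in> X then t i else -1) * g \<alpha> (DD (C \<alpha> - X))) \<alpha> (A \<inter> C \<alpha>)
            = (\<Prod>i\<in>C \<alpha>. \<phi> i) * g \<alpha> (DD ((V - A) \<inter> C \<alpha>))" by simp
      qed
      thus ?thesis by (simp add: prod.distrib setn atLeast0LessThan)
    qed
    have b: "(\<Prod>\<alpha>\<in>{..<n}. \<Prod>i\<in>C \<alpha>. \<phi> i) = (\<Prod>i\<in>V. \<phi> i)"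
    proof -
      have "(\<Prod>i\<in>\<Union>(C ` {..<n}). \<phi> i) = (\<Prod>\<alpha>\<in>{..<n}. \<Prod>i\<in>C \<alpha>. \<phi> i)"
        by (rule prod.UNION_disjoint) (use finC assms(3) in auto)
      thus ?thesis using assms(4) by simp
    qed
    have c: "(\<Prod>i\<in>V. \<phi> i) = (-1) ^ card (V - A) * (\<Prod>i\<in>A. t i)"
    proof -
      have "(\<Prod>i\<in>V. \<phi> i) = (\<Prod>i\<in>V - A. \<phi> i) * (\<Prod>i\<in>A. \<phi> i)"
        by (rule prod.subset_diff[OF AV fV])
      also have "(\<Prod>i\<in>V - A. \<phi> i) = (\<Prod>i\<in>V - A. -1)" by (rule prod.cong) (auto simp: \<phi>_def)
      also have "(\<Prod>i\<in>A. \<phi> i) = (\<Prod>i\<in>A. t i)" by (rule prod.cong) (auto simp: \<phi>_def)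
      finally show ?thesis by simp
    qed
    have d: "(-1) ^ card V * (\<Prod>j\<in>A. - t j) = (-1) ^ card (V - A) * (\<Prod>i\<in>A. t i)"
    proof -
      have cV: "card V = card (V - A) + card A"
        using card_Diff_subset[OF fA AV] card_mono[OF fV AV] by simp
      have m: "(\<Prod>j\<in>A. - t j) = (-1) ^ card A * (\<Prod>j\<in>A. t j)"
      proof -
        have "(\<Prod>j\<in>A. - t j) = (\<Prod>j\<in>A. (-1) * t j)" by simp
        also have "\<dots> = (\<Prod>j\<in>A. (-1::complex)) * (\<Prod>j\<in>A. t j)" by (rule prod.distrib)
        finally show ?thesis by simp
      qed
      have sq: "((-1::complex) ^ card A) * (-1) ^ card A = 1"
        by (simp add: power_mult_distrib[symmetric])
      show ?thesis unfolding m cV power_add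
        by (metis (no_types, lifting) mult.assoc mult.commute mult.right_neutral sq)
    qed
    show "(-1) ^ card V * (E (DD A) * F (DD (V - A))) =
        (\<Prod>\<alpha>\<in>set [0..<n]. (\<lambda>\<alpha> X. (\<Prod>i\<in>C \<alpha>. if i \<in> X then t i else -1) * g \<alpha> (DD (C \<alpha> - X))) \<alpha> (A \<inter> C \<alpha>))"
      unfolding a b c Ev Fv using d by (simp add: mult.assoc)
  qed
  also have "\<dots> = (\<Prod>\<alpha>\<in>set [0..<n]. \<Sum>X\<in>Pow (C \<alpha>).
        (\<lambda>\<alpha> X. (\<Prod>i\<in>C \<alpha>. if i \<in> X then t i else -1) * g \<alpha> (DD (C \<alpha> - X))) \<alpha> X)"
    by (subst UV[symmetric], rule factor) (use finC assms(3) in auto)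
  also have "\<dots> = (\<Prod>\<alpha><n. lam \<alpha> + (\<Sum>i\<in>C \<alpha>. t i - lam \<alpha>))"
    unfolding setn
  proof (rule prod.cong[OF refl])
    fix \<alpha> assume "\<alpha> \<in> {..<n}"
    hence "finite (C \<alpha>)" "C \<alpha> \<noteq> {}" using finC assms(2) by auto
    thus "(\<Sum>X\<in>Pow (C \<alpha>). (\<lambda>\<alpha> X. (\<Prod>i\<in>C \<alpha>. if i \<in> X then t i else -1) * g \<alpha> (DD (C \<alpha> - X))) \<alpha> X)
        = lam \<alpha> + (\<Sum>i\<in>C \<alpha>. t i - lam \<alpha>)"
      using block[of "C \<alpha>" t "lam \<alpha>"] by (simp add: g_def)
  qed
  finally show ?thesis .
qed


end
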